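(* In the two-source game ($m=2$) with $n_1\ge n_2$, if the pure strategy profile in which all users choose the direct path ($u_1=n_1$, $u_2=n_2$) is optimal (maximizes $TR$), then it is also a Nash equilibrium.
   Context: Two-source network: sources $s_1,s_2$ and destination $d$; source $s_i$ has a set $N_i$ of $n_i$ users. Each user generates an independent Poisson flow of packets of rate $\phi>0$; each direct link $(s_i,d)$ has service rate $\mu>0$; the sidelink between $s_1$ and $s_2$ loses packets independently with probability $q\in[0,1]$, and $\bar q=1-q$. Only pure strategies: a user of $N_1$ chooses DP $(s_1,d)$ or IP $(s_1,s_2,d)$; a user of $N_2$ chooses DP $(s_2,d)$ or IP $(s_2,s_1,d)$. With $u_i$ users of $N_i$ on DP, $T_1=u_1\phi+(n_2-u_2)\bar q\phi$, $T_2=u_2\phi+(n_1-u_1)\bar q\phi$ and $TR=\sum_i\frac{\mu T_i}{T_i+\mu}$. The loss rate of a user of $N_i$ is $\phi\frac{T_i}{T_i+\mu}$ on DP and $\phi\left(q+\bar q\frac{T_j}{T_j+\mu}\right)$ on IP to $s_j$. A Nash equilibrium is a pure profile in which no user can strictly decrease its loss rate by unilaterally switching its route. *)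

theory Defs
  imports Main "HOL.Real"
begin

text \<open>Users of N_i are indexed by k < n_i; a pure strategy
  profile is given by s1, s2 :: nat => bool, where s_i k = True means that user k
  of N_i takes the direct path DP, and False means the indirect path IP.\<close>

definition num_dp :: "(nat \<Rightarrow> bool) \<Rightarrow> nat \<Rightarrow> nat" where
  "num_dp s n = card {k. k < n \<and> s k}"

text \<open>Traffic at s_1 and s_2 (qb = 1 - q).\<close>
definition T1 :: "real \<Rightarrow> real \<Rightarrow> nat \<Rightarrow> nat \<Rightarrow> nat \<Rightarrow> nat \<Rightarrow> real" where
  "T1 phi q n1 n2 u1 u2 = real u1 * phi + (real n2 - real u2) * (1 - q) * phi"

definition T2 :: "real \<Rightarrow> real \<Rightarrow> nat \<Rightarrow> nat \<Rightarrow> nat \<Rightarrow> nat \<Rightarrow> real" where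
  "T2 phi q n1 n2 u1 u2 = real u2 * phi + (real n1 - real u1) * (1 - q) * phi"

definition TR :: "real \<Rightarrow> real \<Rightarrow> real \<Rightarrow> nat \<Rightarrow> nat \<Rightarrow> nat \<Rightarrow> nat \<Rightarrow> real" where
  "TR phi mu q n1 n2 u1 u2 =
     mu * T1 phi q n1 n2 u1 u2 / (T1 phi q n1 n2 u1 u2 + mu)
   + mu * T2 phi q n1 n2 u1 u2 / (T2 phi q n1 n2 u1 u2 + mu)"

definition loss1 :: "real \<Rightarrow> real \<Rightarrow> real \<Rightarrow> nat \<Rightarrow> nat \<Rightarrow>
    (nat \<Rightarrow> bool) \<Rightarrow> (nat \<Rightarrow> bool) \<Rightarrow> nat \<Rightarrow> real" where
  "loss1 phi mu q n1 n2 s1 s2 k =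
     (let u1 = num_dp s1 n1; u2 = num_dp s2 n2;
          t1 = T1 phi q n1 n2 u1 u2; t2 = T2 phi q n1 n2 u1 u2 in
      if s1 k then phi * (t1 / (t1 + mu))
      else phi * (q + (1 - q) * (t2 / (t2 + mu))))"

definition loss2 :: "real \<Rightarrow> real \<Rightarrow> real \<Rightarrow> nat \<Rightarrow> nat \<Rightarrow>
    (nat \<Rightarrow> bool) \<Rightarrow> (nat \<Rightarrow> bool) \<Rightarrow> nat \<Rightarrow> real" where
  "loss2 phi mu q n1 n2 s1 s2 k =
     (let u1 = num_dp s1 n1; u2 = num_dp s2 n2;
          t1 = T1 phi q n1 n2 u1 u2; t2 = T2 phi q n1 n2 u1 u2 in
      if s2 k then phi * (t2 / (t2 + mu))
      else phi * (q + (1 - q) * (t1 / (t1 + mu))))"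

definition nash :: "real \<Rightarrow> real \<Rightarrow> real \<Rightarrow> nat \<Rightarrow> nat \<Rightarrow>
    (nat \<Rightarrow> bool) \<Rightarrow> (nat \<Rightarrow> bool) \<Rightarrow> bool" where
  "nash phi mu q n1 n2 s1 s2 \<longleftrightarrow>
     (\<forall>k<n1. \<not> (loss1 phi mu q n1 n2 (s1(k := \<not> s1 k)) s2 k
                 < loss1 phi mu q n1 n2 s1 s2 k)) \<and>
     (\<forall>k<n2. \<not> (loss2 phi mu q n1 n2 s1 (s2(k := \<not> s2 k)) k
                 < loss2 phi mu q n1 n2 s1 s2 k))"

definition optimal :: "real \<Rightarrow> real \<Rightarrow> real \<Rightarrow> nat \<Rightarrow> nat \<Rightarrow>
    (nat \<Rightarrow> bool) \<Rightarrow> (nat \<Rightarrow> bool) \<Rightarrow> bool" where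
  "optimal phi mu q n1 n2 s1 s2 \<longleftrightarrow>
     (\<forall>t1 t2. TR phi mu q n1 n2 (num_dp t1 n1) (num_dp t2 n2)
               \<le> TR phi mu q n1 n2 (num_dp s1 n1) (num_dp s2 n2))"

end

theory Submission
  imports Defs
begin

lemma num_dp_all: "num_dp (\<lambda>_. True) n = n"
  unfolding num_dp_def by simp

lemma num_dp_one: assumes "k < n" shows "num_dp ((\<lambda>_. True)(k := False)) n = n - 1"
proof -
  have "{j. j < n \<and> ((\<lambda>_. True)(k := False)) j} = {..<n} - {k}" by auto
  then show ?thesis unfolding num_dp_def using assms by simp
qed

lemma diff1: fixes a p mu :: real assumes "mu > 0" "a - p \<ge> 0" "p \<ge> 0"
  shows "a/(a+mu) - (a-p)/(a-p+mu) = p*mu/((a+mu)*(a-p+mu))"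
proof -
  have X1: "a+mu \<noteq> 0" using assms by linarith
  have X2: "a-p+mu \<noteq> 0" using assms by linarith
  note X = X1 X2
  have "a/(a+mu) - (a-p)/(a-p+mu) = (a*(a-p+mu) - (a-p)*(a+mu))/((a+mu)*(a-p+mu))"
    using X by (simp add: diff_frac_eq)
  also have "a*(a-p+mu) - (a-p)*(a+mu) = p*mu" by (simp add: algebra_simps)
  finally show ?thesis .
qed

lemma key:
  fixes a b p c mu q :: real
  assumes p: "p > 0" and mu: "mu > 0" and q: "0 \<le> q" "q \<le> 1" and b: "b \<ge> 0"
    and ab: "b \<le> a - p" and c: "c = (1-q)*p"
    and opt: "mu*(a-p)/(a-p+mu) + mu*(b+c)/(b+c+mu) \<le> mu*a/(a+mu) + mu*b/(b+mu)"
  shows "\<not> (p*(q + (1-q)*((b+c)/(b+c+mu))) < p*(a/(a+mu)))"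
proof
  assume h: "p*(q + (1-q)*((b+c)/(b+c+mu))) < p*(a/(a+mu))"
  have c0: "c \<ge> 0" using c p q by simp
  define X where "X = a+mu"
  define Y where "Y = a-p+mu"
  define Z where "Z = b+c+mu"
  define B where "B = b+mu"
  have pos: "X > 0" "Y > 0" "Z > 0" "B > 0" using mu b c0 ab p
    unfolding X_def Y_def Z_def B_def by linarith+
  have d1: "a/X - (a-p)/Y = p*mu/(X*Y)"
    using diff1[of mu a p] mu ab b p unfolding X_def Y_def by simp
  have d2: "(b+c)/Z - b/B = c*mu/(Z*B)"
    using diff1[of mu "b+c" c] mu b c0 unfolding Z_def B_def by simp
  have "mu*((b+c)/Z - b/B) \<le> mu*(a/X - (a-p)/Y)"
    using opt unfolding X_def Y_def Z_def B_def by (simp add: algebra_simps)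
  then have "(b+c)/Z - b/B \<le> a/X - (a-p)/Y"
    using mult_le_cancel_left_pos[OF mu] by blast
  then have "mu*(c/(Z*B)) \<le> mu*(p/(X*Y))" using d1 d2 by (simp add: mult.commute)
  then have "c/(Z*B) \<le> p/(X*Y)" using mult_le_cancel_left_pos[OF mu] by blast
  then have "c*(X*Y) \<le> p*(Z*B)"
    using pos by (simp add: divide_le_eq le_divide_eq mult_pos_pos)
  then have "p*((1-q)*(X*Y)) \<le> p*(Z*B)"
    using c by (simp add: mult.assoc mult.left_commute[of p])
  then have i2: "(1-q)*(X*Y) \<le> Z*B"
    using p by simp
  have "q + (1-q)*((b+c)/Z) < a/X" using h mult_less_cancel_left_pos[OF p] unfolding Z_def X_def by blast
  moreover have "(b+c)/Z = 1 - mu/Z" "a/X = 1 - mu/X"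
    using pos unfolding Z_def X_def by (simp_all add: field_simps)
  ultimately have "q + (1-q)*(1 - mu/Z) < 1 - mu/X" by simp
  then have "mu/X < (1-q)*(mu/Z)" by (simp add: algebra_simps)
  then have "mu*(1/X) < mu*((1-q)/Z)" by (simp add: mult.commute)
  then have "1/X < (1-q)/Z" using mult_less_cancel_left_pos[OF mu] by blast
  then have i3: "Z < (1-q)*X" using pos by (simp add: divide_simps)
  have "Z*B \<le> Z*Y" using ab pos unfolding B_def Y_def by (intro mult_left_mono) auto
  also have "\<dots> < (1-q)*X*Y" using i3 pos by (intro mult_strict_right_mono) auto
  finally show False using i2 by (simp add: mult.assoc)
qed

lemma simple:
  fixes x y p mu q :: real
  assumes "0 \<le> x" "x \<le> y" "mu > 0" "0 \<le> q" "q \<le> 1" "p > 0"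
  shows "\<not> (p*(q + (1-q)*(y/(y+mu))) < p*(x/(x+mu)))"
proof -
  have "x/(x+mu) \<le> y/(y+mu)" using assms by (simp add: divide_simps) (simp add: algebra_simps mult_right_mono)
  moreover have "y/(y+mu) \<le> 1" using assms by simp
  moreover have "q*(1 - y/(y+mu)) \<ge> 0" using assms calculation(2) by simp
  moreover have "q + (1-q)*F = F + q*(1 - F)" for F :: real by (simp add: algebra_simps)
  ultimately have "x/(x+mu) \<le> q + (1-q)*(y/(y+mu))" by (metis add_increasing2 order_trans)
  then show ?thesis using mult_left_mono[OF _ less_imp_le[OF assms(6)]] by (meson not_less)
qed

theorem corollary2:
  fixes phi mu q :: real and n1 n2 :: nat
  assumes "phi > 0" and "mu > 0" and "0 \<le> q" and "q \<le> 1"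
    and "n1 \<ge> n2"
    and "optimal phi mu q n1 n2 (\<lambda>_. True) (\<lambda>_. True)"
  shows "nash phi mu q n1 n2 (\<lambda>_. True) (\<lambda>_. True)"
  proof -
  note A = assms
  have opt: "TR phi mu q n1 n2 (num_dp t1 n1) (num_dp t2 n2) \<le> TR phi mu q n1 n2 n1 n2" for t1 t2
    using A(6) unfolding optimal_def num_dp_all by blast
  have P1: "\<not> (loss1 phi mu q n1 n2 ((\<lambda>_. True)(k := False)) (\<lambda>_. True) k
                 < loss1 phi mu q n1 n2 (\<lambda>_. True) (\<lambda>_. True) k)" if k: "k < n1" for k
  proof -
    have n1: "real (n1 - 1) = real n1 - 1" using k by simp
    define a where "a = real n1 * phi"
    define b where "b = real n2 * phi"
    define c where "c = (1-q)*phi"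
    have T2e: "T2 phi q n1 n2 (n1 - 1) n2 = b + c"
      unfolding T2_def n1 a_def b_def c_def by (simp add: algebra_simps)
    have L1: "loss1 phi mu q n1 n2 ((\<lambda>_. True)(k := False)) (\<lambda>_. True) k
        = phi*(q + (1-q)*((b+c)/(b+c+mu)))"
      unfolding loss1_def num_dp_one[OF k] num_dp_all Let_def T2e by simp
    have L0: "loss1 phi mu q n1 n2 (\<lambda>_. True) (\<lambda>_. True) k = phi*(a/(a+mu))"
      unfolding loss1_def num_dp_all T1_def Let_def by (simp add: a_def)
    show ?thesis
    proof (cases "n1 = n2")
      case True
      have ab0: "a = b" unfolding a_def b_def True ..
      have c0: "c \<ge> 0" unfolding c_def using A by simp
      have a0: "a \<ge> 0" unfolding a_def using A by simp
      show ?thesis unfolding L1 L0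
        by (rule simple[OF a0 _ A(2) A(3) A(4) A(1)]) (use ab0 c0 in linarith)
    next
      case False
      then have "n2 + 1 \<le> n1" using A by simp
      then have "real n2 + 1 \<le> real n1" by linarith
      then have "real n2 * phi \<le> (real n1 - 1) * phi"
        by (intro mult_right_mono) (use A in auto)
      then have ab: "b \<le> a - phi" unfolding a_def b_def by (simp add: left_diff_distrib)
      have o: "TR phi mu q n1 n2 (n1 - 1) n2 \<le> TR phi mu q n1 n2 n1 n2"
        using opt[of "(\<lambda>_. True)(k := False)" "\<lambda>_. True"] unfolding num_dp_one[OF k] num_dp_all .
      have o2: "mu*(a-phi)/(a-phi+mu) + mu*(b+c)/(b+c+mu) \<le> mu*a/(a+mu) + mu*b/(b+mu)"
      proof -
        have e1: "T1 phi q n1 n2 (n1 - 1) n2 = a - phi"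
          unfolding T1_def n1 a_def by (simp add: algebra_simps)
        have e2: "T1 phi q n1 n2 n1 n2 = a" unfolding T1_def a_def by simp
        have e3: "T2 phi q n1 n2 n1 n2 = b" unfolding T2_def b_def by simp
        show ?thesis using o unfolding TR_def e1 e2 e3 T2e .
      qed
      show ?thesis unfolding L1 L0
        by (rule key[OF A(1) A(2) A(3) A(4) _ ab c_def o2]) (simp add: b_def A(1) less_imp_le)
    qed
  qed
  have P2: "\<not> (loss2 phi mu q n1 n2 (\<lambda>_. True) ((\<lambda>_. True)(k := False)) k
                 < loss2 phi mu q n1 n2 (\<lambda>_. True) (\<lambda>_. True) k)" if k: "k < n2" for k
  proof -
    have n2: "real (n2 - 1) = real n2 - 1" using k by simp
    have T1e: "T1 phi q n1 n2 n1 (n2 - 1) = real n1 * phi + (1-q)*phi"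
      unfolding T1_def n2 by (simp add: algebra_simps)
    have L1: "loss2 phi mu q n1 n2 (\<lambda>_. True) ((\<lambda>_. True)(k := False)) k
        = phi*(q + (1-q)*((real n1 * phi + (1-q)*phi)/((real n1 * phi + (1-q)*phi)+mu)))"
      unfolding loss2_def num_dp_one[OF k] num_dp_all Let_def T1e by simp
    have L0: "loss2 phi mu q n1 n2 (\<lambda>_. True) (\<lambda>_. True) k = phi*((real n2 * phi)/((real n2 * phi)+mu))"
      unfolding loss2_def num_dp_all T2_def Let_def by simp
    have h1: "real n2 * phi \<le> real n1 * phi" using A by (simp add: mult_right_mono)
    have h2: "(1-q)*phi \<ge> 0" using A by simp
    have h3: "real n2 * phi \<ge> 0" using A by simp
    have h4: "real n2 * phi \<le> real n1 * phi + (1-q)*phi" using h1 h2 by linarith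
    show ?thesis unfolding L1 L0
      by (rule simple[OF h3 h4 A(2) A(3) A(4) A(1)])
  qed
  show ?thesis unfolding nash_def
  proof (intro conjI allI impI)
    fix k assume "k < n1"
    then show "\<not> (loss1 phi mu q n1 n2 ((\<lambda>_. True)(k := \<not> True)) (\<lambda>_. True) k
                 < loss1 phi mu q n1 n2 (\<lambda>_. True) (\<lambda>_. True) k)" unfolding not_True_eq_False by (rule P1)
  next
    fix k assume "k < n2"
    then show "\<not> (loss2 phi mu q n1 n2 (\<lambda>_. True) ((\<lambda>_. True)(k := \<not> True)) k
                 < loss2 phi mu q n1 n2 (\<lambda>_. True) (\<lambda>_. True) k)" unfolding not_True_eq_False by (rule P2)
  qed
qed

end
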